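(* Let $f\in\mathcal{S}(\mathbb{R})$ and fix $n\in\{0,1,2,3,\dots\}$. Then $D^{n+\frac1k}f(x)\to D^n f(x)$ as $k\to\infty$, uniformly in $x\in\mathbb{R}$.
   Context: $\mathcal{S}(\mathbb{R})$ is the Schwartz space. The Fourier transform is $\hat f(p)=\frac{1}{\sqrt{2\pi}}\int_{\mathbb{R}}e^{-ipx}f(x)\,dx$. For $\alpha\ge0$, $D^\alpha f(x)=\frac{1}{\sqrt{2\pi}}\int_{\mathbb{R}}e^{ipx}(ip)^\alpha\hat f(p)\,dp$, with $i^\alpha=\cos(\alpha\pi/2)+i\sin(\alpha\pi/2)$ and $(ip)^\alpha=i^\alpha p^\alpha$ for $p\ge0$, $(ip)^\alpha=(-i)^\alpha|p|^\alpha$ for $p<0$ (principal branch). For integer $n$, $D^n f=\frac{d^n f}{dx^n}$. *)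

theory Defs
  imports "HOL-Analysis.Analysis"
begin

fun hderiv :: "nat \<Rightarrow> (real \<Rightarrow> complex) \<Rightarrow> real \<Rightarrow> complex" where
  "hderiv 0 f = f"
| "hderiv (Suc j) f = (\<lambda>x. vector_derivative (hderiv j f) (at x))"

definition schwartz :: "(real \<Rightarrow> complex) \<Rightarrow> bool" where
  "schwartz f \<longleftrightarrow>
     (\<forall>j x. hderiv j f differentiable (at x)) \<and>
     (\<forall>m j. \<exists>C. \<forall>x. \<bar>x\<bar> ^ m * norm (hderiv j f x) \<le> C)"

definition fourier :: "(real \<Rightarrow> complex) \<Rightarrow> real \<Rightarrow> complex" where
  "fourier f p = complex_of_real (1 / sqrt (2 * pi)) *
     (LINT x|lborel. cis (- (p * x)) * f x)"

text \<open>|p|^alpha, with the convention |p|^0 = 1 (also at p = 0).\<close>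
definition rpow :: "real \<Rightarrow> real \<Rightarrow> real" where
  "rpow \<alpha> p = (if \<alpha> = 0 then 1 else \<bar>p\<bar> powr \<alpha>)"

text \<open>(ip)^alpha, principal branch: i^alpha p^alpha for p \<ge> 0, (-i)^alpha |p|^alpha for p < 0,
  where i^alpha = cos(alpha pi/2) + i sin(alpha pi/2) and (-i)^alpha = cos(alpha pi/2) - i sin(alpha pi/2).\<close>
definition ipow :: "real \<Rightarrow> real \<Rightarrow> complex" where
  "ipow \<alpha> p = (if p \<ge> 0 then cis (\<alpha> * pi / 2) else cis (- (\<alpha> * pi / 2))) *
                complex_of_real (rpow \<alpha> p)"

definition fracD :: "real \<Rightarrow> (real \<Rightarrow> complex) \<Rightarrow> real \<Rightarrow> complex" where
  "fracD \<alpha> f x = complex_of_real (1 / sqrt (2 * pi)) *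
     (LINT p|lborel. cis (p * x) * ipow \<alpha> p * fourier f p)"

end

theory Submission imports Defs "HOL-Probability.Sinc_Integral" "HOL-Real_Asymp.Real_Asymp" begin

lemma hd_vd:
  assumes "schwartz f"
  shows "(hderiv j f has_vector_derivative hderiv (Suc j) f x) (at x)"
  using assms unfolding schwartz_def by (simp add: vector_derivative_works[symmetric])

lemma hd_cont:
  assumes "schwartz f"
  shows "isCont (hderiv j f) x"
  using assms unfolding schwartz_def by (simp add: differentiable_imp_continuous_within)

lemma hd_cont_on:
  assumes "schwartz f"
  shows "continuous_on UNIV (hderiv j f)"
  using hd_cont[OF assms] by (simp add: continuous_at_imp_continuous_on)

lemma hd_bound:
  assumes "schwartz f"
  shows "\<exists>C. \<forall>x. norm (hderiv j f x) \<le> C * inverse (1 + x^2)"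
proof -
  obtain C0 where C0: "\<And>x. \<bar>x\<bar> ^ 0 * norm (hderiv j f x) \<le> C0"
    using assms unfolding schwartz_def by blast
  obtain C2 where C2: "\<And>x. \<bar>x\<bar> ^ 2 * norm (hderiv j f x) \<le> C2"
    using assms unfolding schwartz_def by blast
  show ?thesis
  proof (intro exI allI)
    fix x :: real
    have "(1 + x^2) * norm (hderiv j f x) \<le> C0 + C2"
      using C0[of x] C2[of x] by (simp add: algebra_simps)
    moreover have "(1 + x^2) > 0" by (simp add: add_pos_nonneg)
    ultimately show "norm (hderiv j f x) \<le> (C0 + C2) * inverse (1 + x^2)"
      by (simp add: field_simps)
  qed
qed

lemma integrable_inv_sq: "integrable lborel (\<lambda>x::real. inverse (1 + x^2))"
  using integrable_inverse_1_plus_square by (simp add: set_integrable_def)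

lemma integrable_decay:
  fixes g :: "real \<Rightarrow> 'b::{banach, second_countable_topology}"
  assumes "g \<in> borel_measurable lborel" "\<And>x. norm (g x) \<le> C * inverse (1 + x^2)"
  shows "integrable lborel g"
proof (rule Bochner_Integration.integrable_bound[OF _ assms(1)])
  show "integrable lborel (\<lambda>x. C * inverse (1 + x^2))"
    using integrable_inv_sq by simp
  show "AE x in lborel. norm (g x) \<le> norm (C * inverse (1 + x^2))"
    by (intro AE_I2) (rule order_trans[OF assms(2)], simp)
qed

lemma cont_meas:
  fixes g :: "real \<Rightarrow> 'b::{banach, second_countable_topology}"
  assumes "continuous_on UNIV g"
  shows "g \<in> borel_measurable lborel"
  using borel_measurable_continuous_onI[OF assms] by simp

lemma cis_meas: "(\<lambda>(p,x). cis (- (p * x)) * f x) \<in> borel_measurable (lborel \<Otimes>\<^sub>M lborel)"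
  if "continuous_on UNIV f" for f :: "real \<Rightarrow> complex"
proof -
  have "continuous_on UNIV (\<lambda>(p,x). cis (- (p * x)) * f x)"
    using that unfolding split_beta
    by (intro continuous_intros continuous_on_compose2[OF that]) auto
  then have "(\<lambda>(p,x). cis (- (p * x)) * f x) \<in> borel_measurable borel"
    by (rule borel_measurable_continuous_onI)
  then show ?thesis by (simp add: lborel_prod)
qed

lemma deriv_F:
  assumes "schwartz f"
  shows "((\<lambda>x. cis (- (p * x)) * hderiv j f x) has_vector_derivative
     (- (\<i> * p)) * cis (- (p * x)) * hderiv j f x + cis (- (p * x)) * hderiv (Suc j) f x) (at x)"
proof -
  have "((\<lambda>x. cis (- (p * x))) has_vector_derivative (- (\<i> * p)) * cis (- (p * x))) (at x)"
  proof -
    have d: "((\<lambda>z::complex. exp (- (\<i> * of_real p * z))) has_field_derivative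
       (- (\<i> * p)) * exp (- (\<i> * of_real p * of_real x))) (at (of_real x))"
      by (auto intro!: derivative_eq_intros)
    have eq: "(\<lambda>x. cis (- (p*x))) = (\<lambda>x. exp (- (\<i> * of_real p * of_real x)))"
      by (auto simp: cis_conv_exp fun_eq_iff mult.assoc)
    have v: "cis (- (p*x)) = exp (- (\<i> * of_real p * of_real x))"
      using eq by metis
    show ?thesis using has_vector_derivative_real_field[OF d, of UNIV] unfolding eq v by simp
  qed
  then show ?thesis
    using hd_vd[OF assms, of j x]
    by (auto intro!: derivative_eq_intros)
qed


lemma int_cis_hd:
  assumes "schwartz f"
  shows "integrable lborel (\<lambda>x. cis (- (p * x)) * hderiv j f x)"
proof -
  obtain C where C: "\<And>x. norm (hderiv j f x) \<le> C * inverse (1 + x^2)"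
    using hd_bound[OF assms] by blast
  have c: "continuous_on UNIV (\<lambda>x. cis (- (p * x)) * hderiv j f x)"
    using hd_cont_on[OF assms, of j]
    by (intro continuous_intros) (auto simp: cis_conv_exp intro!: continuous_intros)
  show ?thesis
    by (rule integrable_decay[OF cont_meas[OF c], of C]) (simp add: norm_mult C)
qed

lemma four_deriv:
  assumes "schwartz f"
  shows "fourier (hderiv (Suc j) f) p = (\<i> * of_real p) * fourier (hderiv j f) p"
proof -
  define G where "G x = (- (\<i> * p)) * cis (- (p * x)) * hderiv j f x + cis (- (p * x)) * hderiv (Suc j) f x" for x
  define F where "F x = cis (- (p * x)) * hderiv j f x" for x
  obtain C where C: "\<And>x. norm (hderiv j f x) \<le> C * inverse (1 + x^2)"
    using hd_bound[OF assms] by blast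
  have i0: "integrable lborel (\<lambda>x. cis (- (p * x)) * hderiv j f x)"
    by (rule int_cis_hd[OF assms])
  have i1: "integrable lborel (\<lambda>x. cis (- (p * x)) * hderiv (Suc j) f x)"
    by (rule int_cis_hd[OF assms])
  have iG: "integrable lborel G"
    unfolding G_def using i0 i1 by (simp add: mult.assoc)
  have lim0: "(F \<longlongrightarrow> 0) at_bot" "(F \<longlongrightarrow> 0) at_top"
  proof -
    have nF: "norm (F x) \<le> C * inverse (1 + x^2)" for x
      using C[of x] by (simp add: F_def norm_mult)
    have "((\<lambda>x::real. C * inverse (1 + x^2)) \<longlongrightarrow> 0) at_bot" by real_asymp
    then show "(F \<longlongrightarrow> 0) at_bot"
      by (rule Lim_null_comparison[rotated]) (simp add: nF)
    have "((\<lambda>x::real. C * inverse (1 + x^2)) \<longlongrightarrow> 0) at_top" by real_asymp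
    then show "(F \<longlongrightarrow> 0) at_top"
      by (rule Lim_null_comparison[rotated]) (simp add: nF)
  qed
  have "(LBINT x=-\<infinity>..\<infinity>. G x) = 0 - 0"
  proof (rule interval_integral_FTC_integrable[where F=F])
    show "(F has_vector_derivative G x) (at x)" for x
      unfolding F_def G_def by (rule deriv_F[OF assms])
    show "isCont G x" for x
      unfolding G_def using hd_cont[OF assms, where j=j and x=x] hd_cont[OF assms, where j="Suc j" and x=x]
      by (auto simp: cis_conv_exp intro!: continuous_intros)
    show "set_integrable lborel (einterval (-\<infinity>) \<infinity>) G"
      using iG by (simp add: set_integrable_def)
    show "((F \<circ> real_of_ereal) \<longlongrightarrow> 0) (at_right (-\<infinity>))"
      using lim0 by (simp add: ereal_tendsto_simps)
    show "((F \<circ> real_of_ereal) \<longlongrightarrow> 0) (at_left \<infinity>)"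
      using lim0 by (simp add: ereal_tendsto_simps)
  qed simp
  then have "integral\<^sup>L lborel G = 0"
    by (simp add: interval_lebesgue_integral_def set_lebesgue_integral_def)
  then have "(- (\<i> * p)) * (LINT x|lborel. cis (- (p * x)) * hderiv j f x)
       + (LINT x|lborel. cis (- (p * x)) * hderiv (Suc j) f x) = 0"
    unfolding G_def using i0 i1 by (simp add: mult.assoc)
  then have "(LINT x|lborel. cis (- (p * x)) * hderiv (Suc j) f x)
      = (\<i> * p) * (LINT x|lborel. cis (- (p * x)) * hderiv j f x)"
    by (simp add: algebra_simps add_eq_0_iff)
  then show ?thesis unfolding fourier_def by simp
qed

lemma four_pow:
  assumes "schwartz f"
  shows "fourier (hderiv m f) p = (\<i> * of_real p) ^ m * fourier f p"
proof (induction m)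
  case 0 then show ?case by simp
next
  case (Suc m)
  show ?case using four_deriv[OF assms, where j=m and p=p] Suc by simp
qed

lemma four_norm_le:
  assumes "schwartz f"
  shows "norm (fourier (hderiv m f) p) \<le> 1 / sqrt (2 * pi) * (LINT x|lborel. norm (hderiv m f x))"
proof -
  have "norm (fourier (hderiv m f) p) = 1 / sqrt (2 * pi) * norm (LINT x|lborel. cis (- (p * x)) * hderiv m f x)"
    unfolding fourier_def by (simp add: norm_mult norm_divide)
  also have "\<dots> \<le> 1 / sqrt (2 * pi) * (LINT x|lborel. norm (cis (- (p * x)) * hderiv m f x))"
    by (intro mult_left_mono integral_norm_bound) auto
  also have "\<dots> = 1 / sqrt (2 * pi) * (LINT x|lborel. norm (hderiv m f x))"
    by (simp add: norm_mult)
  finally show ?thesis .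
qed

lemma four_bound:
  assumes "schwartz f"
  shows "\<exists>B. \<forall>p. \<bar>p\<bar> ^ m * norm (fourier f p) \<le> B"
proof (intro exI allI)
  fix p
  have "\<bar>p\<bar> ^ m * norm (fourier f p) = norm (fourier (hderiv m f) p)"
    unfolding four_pow[OF assms] by (simp add: norm_mult norm_power)
  also have "\<dots> \<le> 1 / sqrt (2 * pi) * (LINT x|lborel. norm (hderiv m f x))"
    by (rule four_norm_le[OF assms])
  finally show "\<bar>p\<bar> ^ m * norm (fourier f p) \<le> 1 / sqrt (2 * pi) * (LINT x|lborel. norm (hderiv m f x))" .
qed

lemma four_meas:
  assumes "schwartz f"
  shows "fourier f \<in> borel_measurable lborel"
proof -
  have [measurable]: "(\<lambda>(p,x). cis (- (p * x)) * f x) \<in> borel_measurable (lborel \<Otimes>\<^sub>M lborel)"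
    using cis_meas hd_cont_on[OF assms, where j=0] by simp
  show ?thesis unfolding fourier_def[abs_def] by measurable
qed

lemma four_decay:
  assumes "schwartz f"
  shows "\<exists>K. \<forall>p. (1 + \<bar>p\<bar> ^ (n+1)) * norm (fourier f p) \<le> K * inverse (1 + p^2)"
proof -
  obtain B0 where B0: "\<And>p. \<bar>p\<bar> ^ 0 * norm (fourier f p) \<le> B0" using four_bound[OF assms] by blast
  obtain B1 where B1: "\<And>p. \<bar>p\<bar> ^ (n+1) * norm (fourier f p) \<le> B1" using four_bound[OF assms] by blast
  obtain B2 where B2: "\<And>p. \<bar>p\<bar> ^ 2 * norm (fourier f p) \<le> B2" using four_bound[OF assms] by blast
  obtain B3 where B3: "\<And>p. \<bar>p\<bar> ^ (n+3) * norm (fourier f p) \<le> B3" using four_bound[OF assms] by blast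
  show ?thesis
  proof (intro exI allI)
    fix p :: real
    have "(1 + p^2) * ((1 + \<bar>p\<bar> ^ (n+1)) * norm (fourier f p)) =
       \<bar>p\<bar> ^ 0 * norm (fourier f p) + \<bar>p\<bar> ^ (n+1) * norm (fourier f p)
       + \<bar>p\<bar> ^ 2 * norm (fourier f p) + \<bar>p\<bar> ^ (n+3) * norm (fourier f p)"
    proof -
      have *: "\<bar>p\<bar>^(n+3) = \<bar>p\<bar>^(n+1) * \<bar>p\<bar>^2"
        using power_add[of "\<bar>p\<bar>" "n+1" 2] by (simp add: numeral_3_eq_3)
      show ?thesis by (simp only: * power2_abs power_0) algebra
    qed
    also have "\<dots> \<le> B0 + B1 + B2 + B3" using B0[of p] B1[of p] B2[of p] B3[of p] by linarith
    finally have "(1 + p^2) * ((1 + \<bar>p\<bar> ^ (n+1)) * norm (fourier f p)) \<le> B0 + B1 + B2 + B3" .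
    moreover have "(1 + p^2) > 0" by (simp add: add_pos_nonneg)
    ultimately show "(1 + \<bar>p\<bar> ^ (n+1)) * norm (fourier f p) \<le> (B0 + B1 + B2 + B3) * inverse (1 + p^2)"
      by (simp add: field_simps)
  qed
qed

lemma rpow_nonneg: "0 \<le> rpow a p"
  by (simp add: rpow_def)

lemma ipow_norm: "norm (ipow a p) = rpow a p"
  by (simp add: ipow_def norm_mult rpow_nonneg)

lemma rpow_bound:
  assumes "real n \<le> a" "a \<le> real n + 1"
  shows "rpow a p \<le> 1 + \<bar>p\<bar> ^ (n+1)"
proof (cases "a = 0")
  case True then show ?thesis by (simp add: rpow_def)
next
  case False
  have a0: "0 \<le> a" using assms(1) by linarith
  show ?thesis
  proof (cases "\<bar>p\<bar> \<le> 1")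
    case True
    then have "\<bar>p\<bar> powr a \<le> 1" by (intro powr_le1 a0) auto
    then show ?thesis using False by (simp add: rpow_def add_increasing2)
  next
    case False2: False
    then have "\<bar>p\<bar> powr a \<le> \<bar>p\<bar> powr (real (n+1))"
      using assms by (intro powr_mono) auto
    also have "\<dots> = \<bar>p\<bar> ^ (n+1)" using False2 by (intro powr_realpow) auto
    finally show ?thesis using False by (simp add: rpow_def)
  qed
qed

lemma ipow_meas: "ipow a \<in> borel_measurable lborel"
  unfolding ipow_def[abs_def] rpow_def by measurable

lemma cis_meas1: "(\<lambda>p. cis (p * x)) \<in> borel_measurable lborel"
  by (rule cont_meas) (auto simp: cis_conv_exp intro!: continuous_intros)

lemma ipow_tendsto:
  assumes "p \<noteq> 0"
  shows "(\<lambda>k. ipow (real n + 1 / real k) p) \<longlonglongrightarrow> ipow (real n) p"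
proof -
  define h where "h t = (if p \<ge> 0 then cis (t * pi / 2) else cis (- (t * pi / 2))) * of_real (\<bar>p\<bar> powr t)" for t
  have hn: "ipow (real n) p = h (real n)"
    using assms by (simp add: h_def ipow_def rpow_def)
  have ev: "eventually (\<lambda>k. ipow (real n + 1 / real k) p = h (real n + 1 / real k)) sequentially"
  proof (rule eventually_sequentiallyI[of 1])
    fix k :: nat assume "1 \<le> k"
    then have "real n + 1 / real k \<noteq> 0" by (simp add: add_nonneg_eq_0_iff)
    then show "ipow (real n + 1 / real k) p = h (real n + 1 / real k)"
      by (simp add: h_def ipow_def rpow_def)
  qed
  have c: "isCont h (real n)"
    unfolding h_def using assms by (cases "0 \<le> p") (auto simp: cis_conv_exp intro!: continuous_intros)
  have "(\<lambda>k. real n + 1 / real k) \<longlonglongrightarrow> real n + 0"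
    by (intro tendsto_add tendsto_const lim_1_over_n)
  then have "(\<lambda>k. h (real n + 1 / real k)) \<longlonglongrightarrow> h (real n)"
    using isCont_tendsto_compose[OF c] by simp
  then show ?thesis unfolding hn using ev by (simp add: tendsto_cong)
qed

theorem theorem3:
  fixes f :: "real \<Rightarrow> complex" and n :: nat
  assumes "schwartz f"
  shows "uniform_limit UNIV (\<lambda>k x. fracD (real n + 1 / real k) f x) (fracD (real n) f) sequentially"
proof -
  define g where "g = fourier f"
  define a where "a k = real n + 1 / real k" for k :: nat
  define c where "c = 1 / sqrt (2 * pi)"
  have c0: "0 < c" by (simp add: c_def)
  obtain K where K: "\<And>p. (1 + \<bar>p\<bar> ^ (n+1)) * norm (g p) \<le> K * inverse (1 + p^2)"
    using four_decay[OF assms, of n] unfolding g_def by blast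
  have gm[measurable]: "g \<in> borel_measurable lborel"
    unfolding g_def by (rule four_meas[OF assms])
  have ipm[measurable]: "ipow b \<in> borel_measurable lborel" for b by (rule ipow_meas)
  have cism[measurable]: "(\<lambda>p. cis (p * x)) \<in> borel_measurable lborel" for x by (rule cis_meas1)
  have a_rng: "real n \<le> a k" "a k \<le> real n + 1" for k
    unfolding a_def by (auto simp: divide_le_eq_1)
  have ipb: "norm (ipow b p) * norm (g p) \<le> K * inverse (1 + p^2)"
    if "real n \<le> b" "b \<le> real n + 1" for b p
  proof -
    have "norm (ipow b p) * norm (g p) \<le> (1 + \<bar>p\<bar> ^ (n+1)) * norm (g p)"
      unfolding ipow_norm by (intro mult_right_mono rpow_bound that) auto
    then show ?thesis using K[of p] by linarith
  qed
  have intI: "integrable lborel (\<lambda>p. cis (p * x) * ipow b p * g p)"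
    if "real n \<le> b" "b \<le> real n + 1" for b x
    by (rule integrable_decay[of _ K]) (use ipb[OF that] in \<open>auto simp: norm_mult\<close>)
  define E where "E k = (LINT p|lborel. norm (ipow (a k) p - ipow (real n) p) * norm (g p))" for k
  have E0: "E \<longlonglongrightarrow> 0"
  proof -
    have "(\<lambda>k. E k) \<longlonglongrightarrow> integral\<^sup>L lborel (\<lambda>p::real. 0::real)"
      unfolding E_def
    proof (rule Bochner_Integration.integral_dominated_convergence[where s="\<lambda>k p. norm (ipow (a k) p - ipow (real n) p) * norm (g p)" and f="\<lambda>p. 0" and w="\<lambda>p. 2 * ((1 + \<bar>p\<bar> ^ (n+1)) * norm (g p))"])
      show "integrable lborel (\<lambda>p. 2 * ((1 + \<bar>p\<bar> ^ (n+1)) * norm (g p)))"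
        by (rule integrable_decay[of _ "2 * K"]) (use K in auto)
      show "AE p in lborel. (\<lambda>k. norm (ipow (a k) p - ipow (real n) p) * norm (g p)) \<longlonglongrightarrow> 0"
      proof (rule AE_mp[OF AE_lborel_singleton[of 0]], intro AE_I2 impI)
        fix p :: real assume "p \<noteq> 0"
        then have "(\<lambda>k. ipow (a k) p - ipow (real n) p) \<longlonglongrightarrow> ipow (real n) p - ipow (real n) p"
          unfolding a_def by (intro tendsto_diff ipow_tendsto tendsto_const)
        then have "(\<lambda>k. norm (ipow (a k) p - ipow (real n) p) * norm (g p)) \<longlonglongrightarrow> norm (ipow (real n) p - ipow (real n) p) * norm (g p)"
          by (intro tendsto_mult tendsto_norm tendsto_const)
        then show "(\<lambda>k. norm (ipow (a k) p - ipow (real n) p) * norm (g p)) \<longlonglongrightarrow> 0" by simp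
      qed
      show "AE p in lborel. norm (norm (ipow (a k) p - ipow (real n) p) * norm (g p))
              \<le> 2 * ((1 + \<bar>p\<bar> ^ (n+1)) * norm (g p))" for k
      proof (intro AE_I2)
        fix p
        have "norm (ipow (a k) p - ipow (real n) p) \<le> norm (ipow (a k) p) + norm (ipow (real n) p)"
          by (rule norm_triangle_ineq4)
        also have "\<dots> \<le> 2 * (1 + \<bar>p\<bar> ^ (n+1))"
          unfolding ipow_norm using rpow_bound[OF a_rng, of k p] rpow_bound[of n "real n" p] by simp
        finally have "norm (ipow (a k) p - ipow (real n) p) * norm (g p) \<le> 2 * (1 + \<bar>p\<bar> ^ (n+1)) * norm (g p)"
          by (rule mult_right_mono) simp
        then show "norm (norm (ipow (a k) p - ipow (real n) p) * norm (g p))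
              \<le> 2 * ((1 + \<bar>p\<bar> ^ (n+1)) * norm (g p))"
          by (simp add: algebra_simps)
      qed
    qed measurable
    then show ?thesis by simp
  qed
  have bnd: "norm (fracD (a k) f x - fracD (real n) f x) \<le> c * E k" for k x
  proof -
    have i1: "integrable lborel (\<lambda>p. cis (p * x) * ipow (a k) p * g p)" by (rule intI[OF a_rng])
    have i2: "integrable lborel (\<lambda>p. cis (p * x) * ipow (real n) p * g p)" by (rule intI) auto
    have "fracD (a k) f x - fracD (real n) f x =
        of_real c * (LINT p|lborel. cis (p * x) * ipow (a k) p * g p - cis (p * x) * ipow (real n) p * g p)"
      unfolding fracD_def c_def g_def[symmetric] using i1 i2 by (simp add: algebra_simps)
    also have "norm \<dots> \<le> c * (LINT p|lborel. norm (cis (p * x) * ipow (a k) p * g p - cis (p * x) * ipow (real n) p * g p))"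
      using c0 by (simp add: norm_mult integral_norm_bound)
    also have "(LINT p|lborel. norm (cis (p * x) * ipow (a k) p * g p - cis (p * x) * ipow (real n) p * g p)) = E k"
      unfolding E_def by (rule Bochner_Integration.integral_cong) (auto simp: norm_mult simp flip: right_diff_distrib left_diff_distrib)
    finally show ?thesis .
  qed
  show ?thesis
  proof (rule uniform_limitI)
    fix e :: real assume e: "0 < e"
    have "(\<lambda>k. c * E k) \<longlonglongrightarrow> c * 0" by (intro tendsto_mult tendsto_const E0)
    then have "eventually (\<lambda>k. c * E k < e) sequentially" using e by (simp add: order_tendstoD(2))
    then show "eventually (\<lambda>k. \<forall>x\<in>UNIV. dist (fracD (real n + 1 / real k) f x) (fracD (real n) f x) < e) sequentially"
    proof (rule eventually_mono)
      fix k assume "c * E k < e"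
      then show "\<forall>x\<in>UNIV. dist (fracD (real n + 1 / real k) f x) (fracD (real n) f x) < e"
        using bnd[of k] unfolding a_def dist_norm by (auto intro: le_less_trans)
    qed
  qed
qed

end
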